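(* Let $n\ge 3$, let $d_1,\dots,d_{n-1}>0$, and let $k_1,\dots,k_{n-1}$ be real gains with $k_1+1>k_2$, $k_i>k_{i+1}$ for $i=2,\ldots,n-2$, and $k_{n-1}>0$. Define $f:\mathbb{R}^{n-1}\to\mathbb{R}^{n-1}$, writing $s_i(z)=\mathrm{sgn}(z_i)\,\mathrm{sgn}(|z_i|-d_i)$, by $$f_1(z)=-(k_1+1)s_1(z)+k_2 s_2(z),$$ $$f_i(z)=s_{i-1}(z)-(k_i+1)s_i(z)+k_{i+1}s_{i+1}(z),\quad i=2,\ldots,n-2,$$ $$f_{n-1}(z)=s_{n-2}(z)-(k_{n-1}+1)s_{n-1}(z).$$ Let $i\in\{2,\ldots,n-2\}$ and $z\in\mathbb{R}^{n-1}$. If $|z_j|\,\big||z_j|-d_j\big|=0$ for $j=1,\ldots,i-1$ and $\mathbf{0}\in\mathcal{K}(f(z))$, then $|z_i|\,\big||z_i|-d_i\big|=0$.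
   Context: The sign function is $\mathrm{sgn}(z)=+1$ if $z\ge 0$ and $\mathrm{sgn}(z)=-1$ if $z<0$. For a (possibly discontinuous) vector field $f$, $\mathcal{K}(f(z))=\bigcap_{\delta>0}\overline{\mathrm{co}}\,(f(B(z,\delta)))$, where $\overline{\mathrm{co}}$ denotes the closed convex hull and $B(z,\delta)$ the open ball of radius $\delta$ centered at $z$. *)

theory Defs
  imports "HOL-Analysis.Analysis"
begin

definition sgnp :: "real \<Rightarrow> real" where
  "sgnp x = (if x \<ge> 0 then 1 else -1)"

definition filippov :: "('a::euclidean_space \<Rightarrow> 'b::euclidean_space) \<Rightarrow> 'a \<Rightarrow> 'b set" where
  "filippov F z = (\<Inter>\<delta>\<in>{0<..}. closure (convex hull (F ` ball z \<delta>)))"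

text \<open>R^(n-1) is represented as real^'m, where the enumeration e :: nat \<Rightarrow> 'm is a
  bijection from {1..n-1} onto the index type; coordinate z_j is z $ e j.\<close>
definition sfun :: "(nat \<Rightarrow> real) \<Rightarrow> (nat \<Rightarrow> 'm) \<Rightarrow> real^'m \<Rightarrow> nat \<Rightarrow> real" where
  "sfun d e z j = sgnp (z $ e j) * sgnp (\<bar>z $ e j\<bar> - d j)"

definition fcomp :: "nat \<Rightarrow> (nat \<Rightarrow> real) \<Rightarrow> (nat \<Rightarrow> real) \<Rightarrow> (nat \<Rightarrow> 'm) \<Rightarrow> real^'m \<Rightarrow> nat \<Rightarrow> real" where
  "fcomp n k d e z j =
     (if j = 1 then 0 else sfun d e z (j - 1))
     - (k j + 1) * sfun d e z j
     + (if j = n - 1 then 0 else k (j + 1) * sfun d e z (j + 1))"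

definition fvec :: "nat \<Rightarrow> (nat \<Rightarrow> real) \<Rightarrow> (nat \<Rightarrow> real) \<Rightarrow> (nat \<Rightarrow> 'm::finite) \<Rightarrow> real^'m \<Rightarrow> real^'m" where
  "fvec n k d e z = (\<chi> m. fcomp n k d e z (inv_into {1..n-1} e m))"

end

theory Submission
  imports Defs
begin

lemma sgnp_cases: "sgnp x = 1 \<or> sgnp x = -1"
  by (simp add: sgnp_def)

lemma sfun_cases: "sfun d e z j = 1 \<or> sfun d e z j = -1"
  unfolding sfun_def using sgnp_cases[of "z $ e j"] sgnp_cases[of "\<bar>z $ e j\<bar> - d j"] by auto

lemma kpos:
  assumes "\<forall>j\<in>{2..n-2}. k j > k (j + 1)" and "k (n - 1) > 0" and "n \<ge> 3"
  shows "m \<ge> 2 \<Longrightarrow> m \<le> n - 1 \<Longrightarrow> (k::nat\<Rightarrow>real) m > 0"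
proof (induction "n - 1 - m" arbitrary: m)
  case 0
  then have "m = n - 1" by simp
  then show ?case using assms by simp
next
  case (Suc x)
  then have "k (m+1) > 0" by simp
  moreover have "m \<in> {2..n-2}" using Suc by auto
  ultimately show ?case using assms(1) by force
qed

theorem lemma1:
  fixes n i :: nat and d k :: "nat \<Rightarrow> real" and e :: "nat \<Rightarrow> 'm::finite" and z :: "real^'m"
  assumes "n \<ge> 3"
    and "\<forall>j\<in>{1..n-1}. d j > 0"
    and "k 1 + 1 > k 2"
    and "\<forall>j\<in>{2..n-2}. k j > k (j + 1)"
    and "k (n - 1) > 0"
    and "bij_betw e {1..n-1} UNIV"
    and "i \<in> {2..n-2}"
    and "\<forall>j\<in>{1..i-1}. \<bar>z $ e j\<bar> * \<bar>\<bar>z $ e j\<bar> - d j\<bar> = 0"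
    and "0 \<in> filippov (fvec n k d e) z"
  shows "\<bar>z $ e i\<bar> * \<bar>\<bar>z $ e i\<bar> - d i\<bar> = 0"
proof (rule ccontr)
  assume H: "\<bar>z $ e i\<bar> * \<bar>\<bar>z $ e i\<bar> - d i\<bar> \<noteq> 0"
  define \<delta> where "\<delta> = min \<bar>z $ e i\<bar> \<bar>\<bar>z $ e i\<bar> - d i\<bar>"
  have dpos: "\<delta> > 0" using H unfolding \<delta>_def by auto
  define \<sigma> where "\<sigma> = sfun d e z i"
  define c where "c = k i - k (i+1)"
  have cpos: "c > 0" using assms(4,7) unfolding c_def by auto
  have kp: "k (i+1) > 0" using kpos[OF assms(4,5,1), of "i+1"] assms(7) by auto
  have iin: "i \<in> {1..n-1}" using assms(7) by auto
  have inv: "inv_into {1..n-1} e (e i) = i"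
    using assms(6) iin by (simp add: bij_betw_def inv_into_f_f)
  have sig: "\<sigma> = 1 \<or> \<sigma> = -1" unfolding \<sigma>_def by (rule sfun_cases)
  have same: "sfun d e y i = \<sigma>" if "y \<in> ball z \<delta>" for y
  proof -
    have n1: "\<bar>(y - z) $ e i\<bar> \<le> norm (y - z)" by (rule component_le_norm_cart)
    have n2: "norm (y - z) < \<delta>" using that by (simp add: dist_norm norm_minus_commute)
    have yl: "\<bar>y $ e i - z $ e i\<bar> < \<delta>" using n1 n2 by simp
    have m1: "\<delta> \<le> \<bar>z $ e i\<bar>" unfolding \<delta>_def by (rule min.cobounded1)
    have m2: "\<delta> \<le> \<bar>\<bar>z $ e i\<bar> - d i\<bar>" unfolding \<delta>_def by (rule min.cobounded2)
    have a1: "\<bar>y $ e i - z $ e i\<bar> < \<bar>z $ e i\<bar>" using yl m1 by linarith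
    have a2: "\<bar>y $ e i - z $ e i\<bar> < \<bar>\<bar>z $ e i\<bar> - d i\<bar>" using yl m2 by linarith
    have "0 \<le> y $ e i \<longleftrightarrow> 0 \<le> z $ e i" using a1 by linarith
    then have 1: "sgnp (y $ e i) = sgnp (z $ e i)"
      unfolding sgnp_def by simp
    have "0 \<le> \<bar>y $ e i\<bar> - d i \<longleftrightarrow> 0 \<le> \<bar>z $ e i\<bar> - d i" using a2 by linarith
    then have 2: "sgnp (\<bar>y $ e i\<bar> - d i) = sgnp (\<bar>z $ e i\<bar> - d i)"
      unfolding sgnp_def by simp
    show ?thesis unfolding \<sigma>_def sfun_def using 1 2 by simp
  qed
  define Hs where "Hs = {x::real^'m. inner (axis (e i) \<sigma>) x \<le> - c}"
  have Hin: "inner (axis (e i) \<sigma>) x = \<sigma> * x $ e i" for x :: "real^'m"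
    by (simp add: inner_axis')
  have img: "fvec n k d e ` ball z \<delta> \<subseteq> Hs"
  proof
    fix x assume "x \<in> fvec n k d e ` ball z \<delta>"
    then obtain y where y: "y \<in> ball z \<delta>" and x: "x = fvec n k d e y" by auto
    have ne1: "i \<noteq> 1" "i \<noteq> n - 1" using assms(7) by auto
    have "x $ e i = sfun d e y (i-1) - (k i + 1) * \<sigma> + k (i+1) * sfun d e y (i+1)"
      using x inv ne1 same[OF y] unfolding fvec_def fcomp_def by simp
    then have "\<sigma> * x $ e i = \<sigma> * sfun d e y (i-1) - (k i + 1) + k (i+1) * (\<sigma> * sfun d e y (i+1))"
      using sig by (auto simp: algebra_simps)
    moreover have "\<sigma> * sfun d e y (i-1) \<le> 1" "\<sigma> * sfun d e y (i+1) \<le> 1"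
      using sig sfun_cases[of d e y "i-1"] sfun_cases[of d e y "i+1"] by auto
    ultimately have "\<sigma> * x $ e i \<le> 1 - (k i + 1) + k (i+1)"
      using kp by (smt (verit) mult_left_le)
    then show "x \<in> Hs" unfolding Hs_def c_def Hin by simp
  qed
  have cl: "closed Hs" unfolding Hs_def by (rule closed_halfspace_le)
  have cv: "convex Hs" unfolding Hs_def by (rule convex_halfspace_le)
  have "closure (convex hull (fvec n k d e ` ball z \<delta>)) \<subseteq> Hs"
    proof (rule closure_minimal[OF _ cl])
    show "convex hull (fvec n k d e ` ball z \<delta>) \<subseteq> Hs"
      by (rule hull_minimal[of _ _ convex, OF img cv])
  qed
  moreover have "0 \<in> closure (convex hull (fvec n k d e ` ball z \<delta>))"
    using assms(9) dpos unfolding filippov_def by auto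
  ultimately show False using cpos unfolding Hs_def Hin by auto
qed

end
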